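(* Let $\rho>0$ and let $y\in\mathbb{R}^n$ satisfy $y_1\ge y_2\ge\cdots\ge y_n$. Then \[ S_\rho(y)=\Pi_{\mathcal D}(y-\rho w), \] where $w\in\mathbb{R}^n$ is given by $w_k=n-2k+1$, $k=1,\dots,n$.
   Context: For $\rho>0$ and $y\in\mathbb{R}^n$, $S_\rho(y):=\operatorname{argmin}_{x\in\mathbb{R}^n}\big\{\tfrac12\|x-y\|^2+\rho\sum_{1\le i<j\le n}|x_i-x_j|\big\}$ (unique minimizer). $\mathcal D:=\{x\in\mathbb{R}^n : x_1\ge x_2\ge\cdots\ge x_n\}$, and $\Pi_{\mathcal D}$ denotes the Euclidean (metric) projection onto $\mathcal D$. *)

theory Defs
  imports "HOL-Analysis.Analysis"
begin

text \<open>Vectors in R^n are modelled as real ^ 'n, with the coordinates of 'n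
  linearly ordered; coordinate i has position rank i = |{j. j <= i}| in 1..n.\<close>

definition rank :: "'n::{finite,linorder} \<Rightarrow> nat" where
  "rank i = card {j. j \<le> i}"

definition prox_obj :: "real \<Rightarrow> real ^ 'n::{finite,linorder} \<Rightarrow> real ^ 'n::{finite,linorder} \<Rightarrow> real" where
  "prox_obj \<rho> y x = (1/2) * (norm (x - y))\<^sup>2
      + \<rho> * (\<Sum>(i,j)\<in>{(i,j). i < j}. \<bar>x $ i - x $ j\<bar>)"

definition S :: "real \<Rightarrow> real ^ 'n::{finite,linorder} \<Rightarrow> real ^ 'n::{finite,linorder}" where
  "S \<rho> y = (THE x. \<forall>z. prox_obj \<rho> y x \<le> prox_obj \<rho> y z)"

definition D :: "(real ^ 'n::{finite,linorder}) set" where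
  "D = {x. \<forall>i j. i \<le> j \<longrightarrow> x $ j \<le> x $ i}"

definition proj :: "('a::real_normed_vector) set \<Rightarrow> 'a \<Rightarrow> 'a" where
  "proj C y = (THE x. x \<in> C \<and> (\<forall>z\<in>C. dist y x \<le> dist y z))"

end

theory Submission imports Defs begin

lemma D_closed: "closed (D :: (real^'n::{finite,linorder}) set)"
proof -
  have "(D::(real^'n::{finite,linorder}) set) = (\<Inter>i. \<Inter>j. {x::real^'n::{finite,linorder}. i \<le> j \<longrightarrow> x$j \<le> x$i})" unfolding D_def by auto
  moreover have "closed {x::real^'n::{finite,linorder}. i \<le> j \<longrightarrow> x$j \<le> x$i}" for i j
  proof (cases "i \<le> j")
    case True
    have "{x::real^'n::{finite,linorder}. i \<le> j \<longrightarrow> x$j \<le> x$i} = {x. x$j - x$i \<le> 0}" using True by auto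
    also have "closed \<dots>" by (intro closed_Collect_le continuous_intros)
    finally show ?thesis .
  qed simp
  ultimately show ?thesis by (metis (no_types, lifting) closed_INT UNIV_I)
qed

lemma D_convex: "convex (D :: (real^'n::{finite,linorder}) set)"
  unfolding D_def convex_def
  by (auto intro!: add_mono mult_left_mono)

lemma D_ne: "(0::real^'n::{finite,linorder}) \<in> D" unfolding D_def by auto

lemma proj_D: "proj (D :: (real^'n::{finite,linorder}) set) q = closest_point D q"
  unfolding proj_def
  apply (rule the_equality)
  using closest_point_exists[OF D_closed, of q] D_ne apply blast
  using closest_point_unique[OF D_convex D_closed] by blast

lemma fin_min: "finite A \<Longrightarrow> A \<noteq> {} \<Longrightarrow> \<exists>x\<in>A. \<forall>a\<in>A. (f x::real) \<le> f a"
proof (induction rule: finite_ne_induct)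
  case (insert x F)
  then show ?case by (metis insert_iff linorder_le_cases order_trans)
qed auto

definition pen :: "real^'n::{finite,linorder} \<Rightarrow> real" where
  "pen x = (\<Sum>(i,j)\<in>{(i,j). i < j}. \<bar>x $ i - x $ j\<bar>)"

lemma pairsum: "(\<Sum>(i,j)\<in>{(i::'n::{finite,linorder},j). i<j}. g i j) = (\<Sum>i\<in>UNIV. \<Sum>j\<in>UNIV. if i<j then g i j else (0::real))"
proof -
  have "(\<Sum>i\<in>UNIV. \<Sum>j\<in>UNIV. if i<j then g i j else (0::real)) = (\<Sum>(i,j)\<in>UNIV\<times>UNIV. if i<j then g i j else 0)"
    by (simp add: sum.cartesian_product)
  also have "\<dots> = (\<Sum>p\<in>UNIV. if fst p < snd p then g (fst p) (snd p) else 0)"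
    by (simp add: case_prod_beta)
  also have "\<dots> = (\<Sum>p\<in>{p\<in>UNIV. fst p < snd p}. g (fst p) (snd p))"
    by (rule sum.inter_filter[symmetric]) simp
  also have "{p\<in>UNIV. fst p < snd p} = {(i,j). i<j}" by auto
  finally show ?thesis by (simp add: case_prod_beta)
qed


lemma card_gt: "card {j. i<j} + rank (i::'n::{finite,linorder}) = CARD('n)"
proof -
  have "card ({j. (i::'n)<j} \<union> {j. j\<le>i}) = card {j. i<j} + card {j. j\<le>i}"
    by (rule card_Un_disjoint) auto
  moreover have "{j. (i::'n)<j} \<union> {j. j\<le>i} = UNIV" by auto
  ultimately show ?thesis unfolding rank_def by simp
qed

lemma card_lt: "rank (j::'n::{finite,linorder}) = card {i. i<j} + 1"
proof -
  have "{i. i\<le>j} = insert j {i. i<j}" by auto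
  then show ?thesis unfolding rank_def by simp
qed

lemma sum_if_const: "(\<Sum>j\<in>(UNIV::'n::finite set). if P j then (c::real) else 0) = c * real (card {j. P j})"
  by (simp add: sum.If_cases)

lemma pen_D:
  fixes x :: "real^'n::{finite,linorder}"
  assumes "x \<in> D"
  shows "pen x = (\<Sum>k\<in>UNIV. x$k * (real CARD('n) - 2 * real (rank k) + 1))"
proof -
  have "pen x = (\<Sum>(i,j)\<in>{(i::'n,j). i<j}. x$i - x$j)"
    unfolding pen_def using assms unfolding D_def
    by (intro sum.cong) auto
  also have "\<dots> = (\<Sum>i\<in>UNIV. \<Sum>j\<in>UNIV. if i<j then x$i - x$j else 0)"
    by (rule pairsum)
  also have "\<dots> = (\<Sum>i\<in>UNIV. \<Sum>j\<in>UNIV. if i<j then x$i else 0) - (\<Sum>i\<in>UNIV. \<Sum>j\<in>UNIV. if i<j then x$j else 0)"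
    by (simp add: sum_subtractf[symmetric] if_distrib cong: if_cong)
  also have "(\<Sum>i\<in>UNIV. \<Sum>j\<in>UNIV. if i<j then x$i else 0) = (\<Sum>i\<in>UNIV. x$i * real (card {j. i<j}))"
    by (simp add: sum_if_const)
  also have "(\<Sum>i\<in>UNIV. \<Sum>j\<in>UNIV. if i<j then x$j else 0) = (\<Sum>j\<in>UNIV. \<Sum>i\<in>UNIV. if i<j then x$j else 0)"
    by (rule sum.swap)
  also have "\<dots> = (\<Sum>j\<in>UNIV. x$j * real (card {i. i<j}))"
    by (simp add: sum_if_const)
  also have "(\<Sum>i\<in>UNIV. x$i * real (card {j. i<j})) - (\<Sum>j\<in>UNIV. x$j * real (card {i. i<j}))
     = (\<Sum>k\<in>UNIV. x$k * (real CARD('n) - 2 * real (rank k) + 1))"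
  proof -
    have "real (card {j. k<j}) - real (card {i. i<k}) = real CARD('n) - 2 * real (rank k) + 1" for k :: 'n
      using card_gt[of k] card_lt[of k] by linarith
    then show ?thesis by (simp add: sum_subtractf[symmetric] right_diff_distrib[symmetric])
  qed
  finally show ?thesis .
qed

lemma pen_full: "2 * pen (x::real^'n::{finite,linorder}) = (\<Sum>i\<in>UNIV. \<Sum>j\<in>UNIV. \<bar>x$i - x$j\<bar>)"
proof -
  have "(\<Sum>i\<in>UNIV. \<Sum>j\<in>UNIV. \<bar>x$i - x$j\<bar>) =
     (\<Sum>i\<in>UNIV. \<Sum>j\<in>UNIV. if i<j then \<bar>x$i - x$j\<bar> else 0) + (\<Sum>i\<in>UNIV. \<Sum>j\<in>UNIV. if j<i then \<bar>x$i - x$j\<bar> else 0)"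
    by (simp add: sum.distrib[symmetric]) (intro sum.cong refl; auto)
  also have "(\<Sum>i\<in>UNIV. \<Sum>j\<in>UNIV. if j<i then \<bar>x$i - x$j\<bar> else 0) = (\<Sum>j\<in>UNIV. \<Sum>i\<in>UNIV. if j<i then \<bar>x$i - x$j\<bar> else 0)"
    by (rule sum.swap)
  also have "\<dots> = (\<Sum>i\<in>UNIV. \<Sum>j\<in>UNIV. if i<j then \<bar>x$i - x$j\<bar> else 0)"
    by (intro sum.cong refl) (simp add: abs_minus_commute)
  finally show ?thesis unfolding pen_def pairsum by simp
qed

lemma pen_perm:
  fixes z :: "real^'n::{finite,linorder}"
  assumes "bij \<sigma>"
  shows "pen (\<chi> k. z $ \<sigma> k) = pen z"
proof -
  have b: "bij_betw \<sigma> UNIV UNIV" using assms by (simp add: bij_betw_def bij_def)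
  have "2 * pen (\<chi> k. z $ \<sigma> k) = (\<Sum>i\<in>UNIV. \<Sum>j\<in>UNIV. \<bar>z $ \<sigma> i - z $ \<sigma> j\<bar>)"
    unfolding pen_full by simp
  also have "\<dots> = (\<Sum>i\<in>UNIV. \<Sum>j\<in>UNIV. \<bar>z $ \<sigma> i - z $ j\<bar>)"
    by (intro sum.cong refl sum.reindex_bij_betw[OF b])
  also have "\<dots> = (\<Sum>i\<in>UNIV. \<Sum>j\<in>UNIV. \<bar>z $ i - z $ j\<bar>)"
    by (rule sum.reindex_bij_betw[OF b, where g = "\<lambda>i. \<Sum>j\<in>UNIV. \<bar>z $ i - z $ j\<bar>"])
  also have "\<dots> = 2 * pen z" unfolding pen_full ..
  finally show ?thesis by simp
qed


lemma sum_two: "i \<noteq> j \<Longrightarrow> (\<Sum>k\<in>(UNIV::'n::finite set). f k) = f i + f j + (\<Sum>k\<in>UNIV-{i,j}. (f k::real))"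
proof -
  assume ij: "i \<noteq> j"
  have "(\<Sum>k\<in>(UNIV::'n set). f k) = f i + (\<Sum>k\<in>UNIV-{i}. f k)" by (rule sum.remove) auto
  also have "(\<Sum>k\<in>UNIV-{i}. f k) = f j + (\<Sum>k\<in>UNIV-{i}-{j}. f k)" by (rule sum.remove) (use ij in auto)
  also have "UNIV-{i}-{j} = UNIV - {i,j}" by auto
  finally show ?thesis by simp
qed

lemma rank_less: "(i::'n::{finite,linorder}) < j \<Longrightarrow> rank i < rank j"
  unfolding rank_def
proof (rule psubset_card_mono)
  assume "i < j"
  then have "j \<in> {k. k \<le> j}" "j \<notin> {k. k \<le> i}" by auto
  with \<open>i < j\<close> show "{k. k \<le> i} \<subset> {k. k \<le> j}" by auto
qed simp

lemma norm_sq: "(norm (v::real^'n::finite))^2 = (\<Sum>k\<in>UNIV. (v$k)^2)"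
  unfolding norm_vec_def L2_set_def by (simp add: sum_nonneg)

lemma swap_bij: "bij (\<lambda>k. if k = i then j else if k = j then i else k)"
  by (rule o_bij[where g = "\<lambda>k. if k = i then j else if k = j then i else k"]) (auto simp: fun_eq_iff)

lemma sort_exists:
  fixes z y :: "real^'n::{finite,linorder}"
  assumes yD: "y \<in> D"
  shows "\<exists>x\<in>D. pen x = pen z \<and> norm (x - y) \<le> norm (z - y)"
proof -
  define A where "A = (\<lambda>\<sigma>. \<chi> k. z $ \<sigma> k) ` {\<sigma>::'n::{finite,linorder}\<Rightarrow>'n. bij \<sigma>}"
  define g where "g x = (\<Sum>k\<in>UNIV. (x$k - y$k)^2)" for x :: "real^'n::{finite,linorder}"
  define W where "W k = real CARD('n) - 2 * real (rank k) + 1" for k :: 'n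
  define h where "h x = (\<Sum>k\<in>UNIV. x$k * W k)" for x :: "real^'n::{finite,linorder}"
  have finA: "finite A" unfolding A_def by simp
  have zA: "z \<in> A" unfolding A_def by (rule image_eqI[where x = id]) auto
  obtain x0 where x0: "x0 \<in> A" "\<forall>a\<in>A. g x0 \<le> g a" using fin_min[OF finA, of g] zA by blast
  define A1 where "A1 = {x\<in>A. g x = g x0}"
  have "finite A1" "A1 \<noteq> {}" using finA x0 unfolding A1_def by auto
  then obtain x where xA1: "x \<in> A1" and xmax: "\<forall>a\<in>A1. - h x \<le> - h a" using fin_min[of A1 "\<lambda>x. - h x"] by blast
  have xA: "x \<in> A" and gx: "\<forall>a\<in>A. g x \<le> g a" using xA1 x0 unfolding A1_def by auto
  have hmax: "\<And>a. a \<in> A \<Longrightarrow> g a \<le> g x \<Longrightarrow> h a \<le> h x"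
    using xmax xA1 gx unfolding A1_def by fastforce
  obtain \<sigma> where \<sigma>: "bij \<sigma>" "x = (\<chi> k. z $ \<sigma> k)" using xA unfolding A_def by auto
  have pen: "pen x = pen z" using pen_perm[OF \<sigma>(1)] \<sigma>(2) by simp
  have "norm (x - y) ^ 2 \<le> norm (z - y) ^ 2"
    using gx zA unfolding g_def norm_sq by simp
  then have nrm: "norm (x - y) \<le> norm (z - y)"
    by (rule power2_le_imp_le) simp
  have "x \<in> D"
  proof (rule ccontr)
    assume "x \<notin> D"
    then obtain i j where ij: "i \<le> j" "x$i < x$j" unfolding D_def by (auto simp: not_le)
    then have "i \<noteq> j" by auto
    with ij have ilj: "i < j" by auto
    define \<tau> where "\<tau> = (\<lambda>k. if k = i then j else if k = j then i else k)"
    define x' where "x' = (\<chi> k. x $ \<tau> k)"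
    have "bij (\<sigma> \<circ> \<tau>)" using \<sigma>(1) swap_bij[of i j] unfolding \<tau>_def by (rule bij_comp[rotated])
    moreover have "x' = (\<chi> k. z $ (\<sigma> \<circ> \<tau>) k)" unfolding x'_def \<sigma>(2) by simp
    ultimately have x'A: "x' \<in> A" unfolding A_def by blast
    have x'i: "x'$i = x$j" and x'j: "x'$j = x$i" and x'k: "\<And>k. k \<in> UNIV - {i,j} \<Longrightarrow> x'$k = x$k"
      unfolding x'_def \<tau>_def by auto
    have yij: "y$j \<le> y$i" using yD ilj unfolding D_def by auto
    have "g x' = (x$j - y$i)^2 + (x$i - y$j)^2 + (\<Sum>k\<in>UNIV-{i,j}. (x$k - y$k)^2)"
      unfolding g_def sum_two[OF \<open>i \<noteq> j\<close>] x'i x'j using x'k by simp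
    moreover have "g x = (x$i - y$i)^2 + (x$j - y$j)^2 + (\<Sum>k\<in>UNIV-{i,j}. (x$k - y$k)^2)"
      unfolding g_def sum_two[OF \<open>i \<noteq> j\<close>] by simp
    moreover have "(x$j - x$i) * (y$i - y$j) \<ge> 0" using ij yij by simp
    ultimately have "g x' \<le> g x" by (simp add: power2_eq_square algebra_simps)
    then have hle: "h x' \<le> h x" using hmax x'A by blast
    have "h x' = x$j * W i + x$i * W j + (\<Sum>k\<in>UNIV-{i,j}. x$k * W k)"
      unfolding h_def sum_two[OF \<open>i \<noteq> j\<close>] x'i x'j using x'k by simp
    moreover have "h x = x$i * W i + x$j * W j + (\<Sum>k\<in>UNIV-{i,j}. x$k * W k)"
      unfolding h_def sum_two[OF \<open>i \<noteq> j\<close>] by simp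
    moreover have "W i > W j" using rank_less[OF ilj] unfolding W_def by simp
    moreover have "(x$j - x$i) * (W i - W j) > 0" using ij calculation(3) by simp
    ultimately have "h x' > h x" by (simp add: algebra_simps)
    with hle show False by simp
  qed
  with pen nrm show ?thesis by blast
qed


lemma prox_pen: "prox_obj \<rho> y x = (1/2) * (norm (x - y))\<^sup>2 + \<rho> * pen x"
  unfolding prox_obj_def pen_def ..

lemma pen_mid: "pen ((1/2) *\<^sub>R (x + p)) \<le> (pen x + pen p) / 2"
proof -
  have "pen ((1/2) *\<^sub>R (x + p)) \<le> (\<Sum>(i,j)\<in>{(i,j). i < j}. \<bar>x $ i - x $ j\<bar> / 2 + \<bar>p $ i - p $ j\<bar> / 2)"
    unfolding pen_def
  proof (intro sum_mono, clarify)
    fix i j :: 'a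
    have "\<bar>((1/2) *\<^sub>R (x + p)) $ i - ((1/2) *\<^sub>R (x + p)) $ j\<bar> = \<bar>(x$i - x$j) + (p$i - p$j)\<bar> / 2"
      by (simp add: algebra_simps abs_divide[symmetric] add_divide_distrib[symmetric] diff_divide_distrib[symmetric])
    also have "\<dots> \<le> \<bar>x $ i - x $ j\<bar> / 2 + \<bar>p $ i - p $ j\<bar> / 2"
      using abs_triangle_ineq[of "x$i - x$j" "p$i - p$j"] by simp
    finally show "\<bar>((1/2) *\<^sub>R (x + p)) $ i - ((1/2) *\<^sub>R (x + p)) $ j\<bar> \<le> \<bar>x $ i - x $ j\<bar> / 2 + \<bar>p $ i - p $ j\<bar> / 2" .
  qed
  also have "\<dots> = (pen x + pen p) / 2"
    unfolding pen_def by (simp add: sum.distrib sum_divide_distrib add_divide_distrib case_prod_beta)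
  finally show ?thesis .
qed

lemma norm_mid: "(norm ((1/2) *\<^sub>R (x + p) - y))^2 = (norm (x - y))^2 / 2 + (norm (p - y))^2 / 2 - (norm (x - p))^2 / 4"
  for x p y :: "'a::real_inner"
proof -
  have e: "(1/2) *\<^sub>R (x + p) - y = (1/2) *\<^sub>R ((x - y) + (p - y))"
    by (simp add: algebra_simps) (metis scaleR_half_double scaleR_add_right)
  have e2: "x - p = (x - y) - (p - y)" by simp
  show ?thesis unfolding e e2 power2_norm_eq_inner
    by (simp add: power2_norm_eq_inner inner_add_left inner_add_right inner_diff_left inner_diff_right inner_commute algebra_simps) (simp add: field_simps)
qed

lemma quad_shift: "(1/2) * (norm (x - y))^2 + \<rho> * inner x W = (1/2) * (norm (x - (y - \<rho> *\<^sub>R W)))^2 + (\<rho> * inner W y - (1/2) * \<rho>^2 * (norm W)^2)"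
  for x y W :: "'a::real_inner"
  unfolding power2_norm_eq_inner by (simp add: inner_add_left inner_add_right inner_diff_left inner_diff_right inner_commute algebra_simps power2_eq_square)

lemma lin_aux: "(a::real) \<le> (b + c)/2 - d/8 \<Longrightarrow> b \<le> a \<Longrightarrow> b = c \<Longrightarrow> d/8 \<le> 0" by (simp add: field_simps)

theorem proposition2p2:
  fixes \<rho> :: real and y :: "real ^ 'n::{finite,linorder}"
  assumes "\<rho> > 0"
    and "y \<in> D"
  shows "S \<rho> y = proj D (y - \<rho> *\<^sub>R (\<chi> k. real CARD('n) - 2 * real (rank k) + 1))"
proof -
  define W :: "real^'n::{finite,linorder}" where "W = (\<chi> k. real CARD('n) - 2 * real (rank k) + 1)"
  define q where "q = y - \<rho> *\<^sub>R W"
  define p where "p = closest_point D q"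
  define C where "C = \<rho> * inner W y - (1/2) * \<rho>^2 * (norm W)^2"
  have pD: "p \<in> D" unfolding p_def using closest_point_exists[OF D_closed, of q] D_ne by blast
  have pclose: "\<And>x. x \<in> D \<Longrightarrow> dist q p \<le> dist q x" unfolding p_def using closest_point_le[OF D_closed] by blast
  have FD: "prox_obj \<rho> y x = (1/2) * (norm (x - q))^2 + C" if "x \<in> D" for x
  proof -
    have "pen x = inner x W" unfolding pen_D[OF that] W_def inner_vec_def by simp
    then show ?thesis unfolding prox_pen q_def C_def using quad_shift[of x y \<rho> W] by simp
  qed
  have pmin: "prox_obj \<rho> y p \<le> prox_obj \<rho> y z" for z
  proof -
    obtain x where x: "x \<in> D" "pen x = pen z" "norm (x - y) \<le> norm (z - y)"
      using sort_exists[OF assms(2), of z] by blast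
    have "norm (p - q) \<le> norm (x - q)" using pclose[OF x(1)] by (simp add: dist_norm norm_minus_commute)
    then have "(norm (p - q))^2 \<le> (norm (x - q))^2" by (simp add: power_mono)
    then have "prox_obj \<rho> y p \<le> prox_obj \<rho> y x" unfolding FD[OF pD] FD[OF x(1)] by simp
    also have "\<dots> \<le> prox_obj \<rho> y z" unfolding prox_pen using x(2,3) by (simp add: power_mono)
    finally show ?thesis .
  qed
  have uniq: "x = p" if xm: "\<forall>z. prox_obj \<rho> y x \<le> prox_obj \<rho> y z" for x
  proof -
    have eq: "prox_obj \<rho> y x = prox_obj \<rho> y p" using xm pmin by (meson order_antisym)
    define m where "m = (1/2) *\<^sub>R (x + p)"
    have "prox_obj \<rho> y m \<le> (prox_obj \<rho> y x + prox_obj \<rho> y p) / 2 - (norm (x - p))^2 / 8"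
    proof -
      have "\<rho> * pen m \<le> \<rho> * ((pen x + pen p) / 2)"
        unfolding m_def using pen_mid[of x p] assms(1) by (simp add: mult_left_mono)
      then show ?thesis unfolding prox_pen norm_mid m_def by (simp add: algebra_simps)
    qed
    moreover have "prox_obj \<rho> y x \<le> prox_obj \<rho> y m" using xm by blast
    ultimately have "(norm (x - p))^2 / 8 \<le> 0" using eq
      by (rule lin_aux)
    then have "(norm (x - p))^2 \<le> 0" by simp
    then show ?thesis by simp
  qed
  have "S \<rho> y = p" unfolding S_def
    by (rule the_equality) (use pmin uniq in auto)
  then show ?thesis unfolding proj_D p_def q_def W_def .
qed

end
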